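(* Let $T=((\Omega,\mathcal{A}),\{(\Omega,\mathcal{M}_i)\}_{i\in N},\{t_i\}_{i\in N})$ be a type space. Then exactly one of the following holds: (a) the players' beliefs in $T$ are universally consistent; (b) $T$ admits a universal money pump.
   Context: A field on a set $X$ is a collection of subsets of $X$ containing $X$ and closed under complements and finite intersections. For a field $\mathcal{A}$ on $\Omega$, $\mathrm{pba}(\Omega,\mathcal{A})$ is the set of finitely additive nonnegative $P:\mathcal{A}\to\mathbb{R}$ with $P(\Omega)=1$; $B(\Omega,\mathcal{A})$ is the sup-norm closure of the linear span of indicators of sets in $\mathcal{A}$. $\mathrm{ba}(\Omega,\mathcal{A})$ carries the weak* topology (weakest making $\mu\mapsto\int f\,d\mu$ continuous for all $f\in B(\Omega,\mathcal{A})$); $\overline{\,\cdot\,}^\ast$ denotes weak* closure. A type space is $T=((\Omega,\mathcal{A}),\{(\Omega,\mathcal{M}_i)\}_{i\in N},\{t_i\}_{i\in N})$ with $N$ a nonempty set of players, fields $\mathcal{M}_i\subseteq\mathcal{A}$ on a set $\Omega$, and $t_i:\Omega\times\mathcal{A}\to[0,1]$ with: $t_i(\omega,\cdot)\in\mathrm{pba}(\Omega,\mathcal{A})$; $t_i(\cdot,E)\in B(\Omega,\mathcal{M}_i)$ for all $E\in\mathcal{A}$; $t_i(\omega,E)=1$ whenever $E\in\mathcal{M}_i$, $\omega\in E$. Let $\Pi_i=\overline{\mathrm{conv}\{t_i(\omega,\cdot):\omega\in\Omega\}}^\ast$ (equivalently the $P\in\mathrm{pba}(\Omega,\mathcal{A})$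 with $P(E\cap F)=\int_F t_i(\cdot,E)\,dP$ for all $E\in\mathcal{A},F\in\mathcal{M}_i$). For $I\subseteq N$, a nonempty $S\subseteq\Omega$ is an $I$-common certainty component if there is $E\in\mathcal{A}$ with $E\subseteq S$ and $t_i(\omega,E)=1$ for all $\omega\in S$, $i\in I$. A set $E$ is $I$-commonly certain at $\omega$ if there is an $I$-common certainty component $S$ with $\omega\in S\subseteq E$. Universal consistency: for every finite $I\subseteq N$ and every $I$-common certainty component $S$ there is $P\in\bigcap_{i\in I}\Pi_i$ with $\inf\{P(E):E\in\mathcal{A},S\subseteq E\}>0$. A semi-bet is a family $(f_i)_{i\in I}\subseteq B(\Omega,\mathcal{A})$, $I\subseteq N$ finite, such that for every $\omega\in\Omega$ the set $\{\omega':\int f_i\,dt_i(\omega',\cdot)\ge0\ \forall i\in I\}$ is $I$-commonly certain at $\omega$. $T$ admits a universal money pump if there exist a finite $I\subseteq N$ and an $I$-common certainty component $S$ such that for every $P\in\mathrm{pba}(\Omega,\mathcal{A})$ with $\inf\{P(E):E\in\mathcal{A},S\subseteq E\}>0$ there is a semi-bet $(f_i)_{i\in I}$ with $\int\sum_{i\in I}f_i\,dP<0$. *)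

theory Defs
  imports Complex_Main "HOL-Library.Indicator_Function"
begin

text \<open>The state space Omega is the universe of the type 'w.
  Players have type 'i; the set of players is N.\<close>

definition field_on :: "'w set set \<Rightarrow> bool" where
  "field_on A \<longleftrightarrow> UNIV \<in> A \<and> (\<forall>E\<in>A. - E \<in> A) \<and> (\<forall>E\<in>A. \<forall>F\<in>A. E \<inter> F \<in> A)"

definition pba :: "'w set set \<Rightarrow> ('w set \<Rightarrow> real) \<Rightarrow> bool" where
  "pba A P \<longleftrightarrow> (\<forall>E\<in>A. P E \<ge> 0) \<and>
     (\<forall>E\<in>A. \<forall>F\<in>A. E \<inter> F = {} \<longrightarrow> P (E \<union> F) = P E + P F) \<and> P UNIV = 1"

text \<open>Elements of ba(Omega,A): bounded finitely additive set functions on A,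
  represented extensionally (value 0 outside A).\<close>
definition ba :: "'w set set \<Rightarrow> ('w set \<Rightarrow> real) \<Rightarrow> bool" where
  "ba A \<mu> \<longleftrightarrow> (\<forall>E\<in>A. \<forall>F\<in>A. E \<inter> F = {} \<longrightarrow> \<mu> (E \<union> F) = \<mu> E + \<mu> F) \<and>
     (\<exists>C. \<forall>E\<in>A. \<bar>\<mu> E\<bar> \<le> C) \<and> (\<forall>E. E \<notin> A \<longrightarrow> \<mu> E = 0)"

definition ext_on :: "'w set set \<Rightarrow> ('w set \<Rightarrow> real) \<Rightarrow> 'w set \<Rightarrow> real" where
  "ext_on A P = (\<lambda>E. if E \<in> A then P E else 0)"

definition simple_fun :: "'w set set \<Rightarrow> ('w \<Rightarrow> real) \<Rightarrow> bool" where
  "simple_fun A s \<longleftrightarrow> (\<exists>(n::nat) c E. (\<forall>k<n. E k \<in> A) \<and>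
      s = (\<lambda>\<omega>. \<Sum>k<n. c k * indicator (E k) \<omega>))"

definition Bfun :: "'w set set \<Rightarrow> ('w \<Rightarrow> real) set" where
  "Bfun A = {f. \<forall>\<epsilon>>0. \<exists>s. simple_fun A s \<and> (\<forall>\<omega>. \<bar>f \<omega> - s \<omega>\<bar> \<le> \<epsilon>)}"

definition simple_integral_ba :: "('w set \<Rightarrow> real) \<Rightarrow> ('w \<Rightarrow> real) \<Rightarrow> real" where
  "simple_integral_ba \<mu> s = (\<Sum>y\<in>range s. y * \<mu> (s -` {y}))"

definition integral_ba :: "'w set set \<Rightarrow> ('w set \<Rightarrow> real) \<Rightarrow> ('w \<Rightarrow> real) \<Rightarrow> real" where
  "integral_ba A \<mu> f = (THE r. \<forall>\<epsilon>>0. \<exists>\<delta>>0. \<forall>s. simple_fun A s \<and> (\<forall>\<omega>. \<bar>f \<omega> - s \<omega>\<bar> \<le> \<delta>)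
        \<longrightarrow> \<bar>simple_integral_ba \<mu> s - r\<bar> < \<epsilon>)"

text \<open>Weak* closure in ba(Omega,A) (closure w.r.t. the weakest topology making
  mu |-> integral of f continuous for all f in B(Omega,A)), via basic neighbourhoods.\<close>
definition wstar_closure :: "'w set set \<Rightarrow> ('w set \<Rightarrow> real) set \<Rightarrow> ('w set \<Rightarrow> real) set" where
  "wstar_closure A X = {\<mu>. ba A \<mu> \<and>
     (\<forall>G. finite G \<longrightarrow> G \<subseteq> Bfun A \<longrightarrow> (\<forall>\<epsilon>>0. \<exists>\<nu>\<in>X. \<forall>f\<in>G.
        \<bar>integral_ba A \<mu> f - integral_ba A \<nu> f\<bar> < \<epsilon>))}"

definition conv_hull :: "('w set \<Rightarrow> real) set \<Rightarrow> ('w set \<Rightarrow> real) set" where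
  "conv_hull X = {\<lambda>E. \<Sum>k<n. l k * Q k E | (n::nat) l Q.
       n \<ge> 1 \<and> (\<forall>k<n. l k \<ge> 0 \<and> Q k \<in> X) \<and> (\<Sum>k<n. l k) = 1}"

definition type_space ::
  "'i set \<Rightarrow> 'w set set \<Rightarrow> ('i \<Rightarrow> 'w set set) \<Rightarrow> ('i \<Rightarrow> 'w \<Rightarrow> 'w set \<Rightarrow> real) \<Rightarrow> bool" where
  "type_space N A M t \<longleftrightarrow> N \<noteq> {} \<and> field_on A \<and>
     (\<forall>i\<in>N. field_on (M i) \<and> M i \<subseteq> A \<and>
        (\<forall>\<omega>. pba A (t i \<omega>) \<and> (\<forall>E\<in>A. t i \<omega> E \<in> {0..1})) \<and>
        (\<forall>E\<in>A. (\<lambda>\<omega>. t i \<omega> E) \<in> Bfun (M i)) \<and>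
        (\<forall>E\<in>M i. \<forall>\<omega>\<in>E. t i \<omega> E = 1))"

definition Pi_set :: "'w set set \<Rightarrow> ('i \<Rightarrow> 'w \<Rightarrow> 'w set \<Rightarrow> real) \<Rightarrow> 'i \<Rightarrow> ('w set \<Rightarrow> real) set" where
  "Pi_set A t i = wstar_closure A (conv_hull {ext_on A (t i \<omega>) | \<omega>. True})"

definition cc_component ::
  "'w set set \<Rightarrow> ('i \<Rightarrow> 'w \<Rightarrow> 'w set \<Rightarrow> real) \<Rightarrow> 'i set \<Rightarrow> 'w set \<Rightarrow> bool" where
  "cc_component A t I S \<longleftrightarrow> S \<noteq> {} \<and> (\<exists>E\<in>A. E \<subseteq> S \<and> (\<forall>\<omega>\<in>S. \<forall>i\<in>I. t i \<omega> E = 1))"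

definition commonly_certain ::
  "'w set set \<Rightarrow> ('i \<Rightarrow> 'w \<Rightarrow> 'w set \<Rightarrow> real) \<Rightarrow> 'i set \<Rightarrow> 'w set \<Rightarrow> 'w \<Rightarrow> bool" where
  "commonly_certain A t I E \<omega> \<longleftrightarrow> (\<exists>S. cc_component A t I S \<and> \<omega> \<in> S \<and> S \<subseteq> E)"

definition outer_inf :: "('w set \<Rightarrow> real) \<Rightarrow> 'w set set \<Rightarrow> 'w set \<Rightarrow> real" where
  "outer_inf P A S = Inf {P E | E. E \<in> A \<and> S \<subseteq> E}"

definition universally_consistent ::
  "'i set \<Rightarrow> 'w set set \<Rightarrow> ('i \<Rightarrow> 'w set set) \<Rightarrow> ('i \<Rightarrow> 'w \<Rightarrow> 'w set \<Rightarrow> real) \<Rightarrow> bool" where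
  "universally_consistent N A M t \<longleftrightarrow>
     (\<forall>I S. finite I \<longrightarrow> I \<subseteq> N \<longrightarrow> cc_component A t I S \<longrightarrow>
        (\<exists>P. pba A P \<and> (\<forall>i\<in>I. P \<in> Pi_set A t i) \<and> outer_inf P A S > 0))"

definition semi_bet ::
  "'w set set \<Rightarrow> ('i \<Rightarrow> 'w \<Rightarrow> 'w set \<Rightarrow> real) \<Rightarrow> 'i set \<Rightarrow> ('i \<Rightarrow> 'w \<Rightarrow> real) \<Rightarrow> bool" where
  "semi_bet A t I f \<longleftrightarrow> finite I \<and> (\<forall>i\<in>I. f i \<in> Bfun A) \<and>
     (\<forall>\<omega>. commonly_certain A t I {\<omega>'. \<forall>i\<in>I. integral_ba A (t i \<omega>') (f i) \<ge> 0} \<omega>)"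

definition universal_money_pump ::
  "'i set \<Rightarrow> 'w set set \<Rightarrow> ('i \<Rightarrow> 'w set set) \<Rightarrow> ('i \<Rightarrow> 'w \<Rightarrow> 'w set \<Rightarrow> real) \<Rightarrow> bool" where
  "universal_money_pump N A M t \<longleftrightarrow>
     (\<exists>I S. finite I \<and> I \<subseteq> N \<and> cc_component A t I S \<and>
        (\<forall>P. pba A P \<and> outer_inf P A S > 0 \<longrightarrow>
           (\<exists>f. semi_bet A t I f \<and> integral_ba A P (\<lambda>\<omega>. \<Sum>i\<in>I. f i \<omega>) < 0)))"

end

theory Submission
  imports Defs
begin

lemma field_UNIV: "field_on A \<Longrightarrow> UNIV \<in> A" by (simp add: field_on_def)
lemma field_Compl: "field_on A \<Longrightarrow> E \<in> A \<Longrightarrow> - E \<in> A" by (simp add: field_on_def)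
lemma field_Int: "field_on A \<Longrightarrow> E \<in> A \<Longrightarrow> F \<in> A \<Longrightarrow> E \<inter> F \<in> A" by (simp add: field_on_def)
lemma field_empty: "field_on A \<Longrightarrow> {} \<in> A"
  using field_Compl[of A UNIV] field_UNIV[of A] by simp
lemma field_Un: "field_on A \<Longrightarrow> E \<in> A \<Longrightarrow> F \<in> A \<Longrightarrow> E \<union> F \<in> A"
proof -
  assume a: "field_on A" "E \<in> A" "F \<in> A"
  have "- (- E \<inter> - F) \<in> A" by (rule field_Compl[OF a(1) field_Int[OF a(1) field_Compl[OF a(1,2)] field_Compl[OF a(1,3)]]])
  moreover have "- (- E \<inter> - F) = E \<union> F" by auto
  ultimately show ?thesis by simp
qed

lemma field_UN:
  assumes "field_on A" "finite P" "\<forall>p\<in>P. H p \<in> A"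
  shows "(\<Union>p\<in>P. H p) \<in> A"
  using assms(2,3)
proof (induction P rule: finite_induct)
  case empty then show ?case using field_empty[OF assms(1)] by simp
next
  case (insert x F) then show ?case using field_Un[OF assms(1)] by simp
qed

definition gm :: "'w set set \<Rightarrow> ('w set \<Rightarrow> real) \<Rightarrow> bool" where
 "gm A \<mu> \<longleftrightarrow> (\<forall>E\<in>A. \<mu> E \<ge> 0) \<and> (\<forall>E\<in>A. \<forall>F\<in>A. E \<inter> F = {} \<longrightarrow> \<mu> (E \<union> F) = \<mu> E + \<mu> F)"

lemma gm_empty: "gm A \<mu> \<Longrightarrow> field_on A \<Longrightarrow> \<mu> {} = 0"
  unfolding gm_def using field_empty[of A] by force

lemma gm_additive:
  assumes "gm A \<mu>" "field_on A" "finite P" "\<forall>p\<in>P. H p \<in> A"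
    "\<forall>p\<in>P. \<forall>q\<in>P. p \<noteq> q \<longrightarrow> H p \<inter> H q = {}"
  shows "\<mu> (\<Union>p\<in>P. H p) = (\<Sum>p\<in>P. \<mu> (H p))"
  using assms(3,4,5)
proof (induction P rule: finite_induct)
  case empty then show ?case using gm_empty[OF assms(1,2)] by simp
next
  case (insert x F)
  have u: "(\<Union>p\<in>F. H p) \<in> A" using field_UN[OF assms(2) insert(1)] insert(4) by simp
  have d: "H x \<inter> (\<Union>p\<in>F. H p) = {}" using insert(2,5) by fastforce
  have "\<mu> (\<Union>p\<in>insert x F. H p) = \<mu> (H x \<union> (\<Union>p\<in>F. H p))" by simp
  also have "\<dots> = \<mu> (H x) + \<mu> (\<Union>p\<in>F. H p)"
    using assms(1) u d insert(4) unfolding gm_def by simp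
  also have "\<dots> = \<mu> (H x) + (\<Sum>p\<in>F. \<mu> (H p))"
    using insert by simp
  finally show ?case using insert(1,2) by simp
qed

lemma gm_pba: "pba A P \<Longrightarrow> gm A P"
  unfolding pba_def gm_def by simp

lemma gm_mono_UNIV:
  assumes "gm A \<mu>" "field_on A" "E \<in> A"
  shows "\<mu> E \<le> \<mu> UNIV"
proof -
  have "E \<inter> - E = {}" by auto
  then have "\<mu> (E \<union> - E) = \<mu> E + \<mu> (- E)"
    using assms field_Compl[OF assms(2,3)] unfolding gm_def by blast
  moreover have "\<mu> (- E) \<ge> 0" using assms field_Compl[OF assms(2,3)] unfolding gm_def by auto
  ultimately show ?thesis by simp
qed

lemma simple_fun_repr_props:
  assumes "field_on A"
  shows "(\<forall>k<(n::nat). E k \<in> A) \<longrightarrow> finite (range (\<lambda>\<omega>. \<Sum>k<n. c k * indicator (E k) \<omega> :: real)) \<and>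
     (\<forall>y. (\<lambda>\<omega>. \<Sum>k<n. c k * indicator (E k) \<omega>) -` {y} \<in> A)"
proof (induction n)
  case 0
  have "\<forall>y. (\<lambda>\<omega>. 0::real) -` {y} \<in> A"
  proof
    fix y :: real
    show "(\<lambda>\<omega>. 0::real) -` {y} \<in> A"
      using field_UNIV[OF assms] field_empty[OF assms] by (cases "y = 0") auto
  qed
  then show ?case by (simp add: image_def)
next
  case (Suc n)
  show ?case
  proof
    assume a: "\<forall>k<Suc n. E k \<in> A"
    define f where "f = (\<lambda>\<omega>. \<Sum>k<n. c k * indicator (E k) \<omega> :: real)"
    have IH: "finite (range f)" "\<forall>y. f -` {y} \<in> A" using Suc a unfolding f_def by auto
    have eq: "(\<lambda>\<omega>. \<Sum>k<Suc n. c k * indicator (E k) \<omega>) = (\<lambda>\<omega>. f \<omega> + c n * indicator (E n) \<omega>)"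
      unfolding f_def by simp
    have "range (\<lambda>\<omega>. f \<omega> + c n * indicator (E n) \<omega>) \<subseteq> (\<lambda>(x,y). x + y) ` (range f \<times> {0, c n})"
      by (auto simp: indicator_def image_iff)
    then have fin: "finite (range (\<lambda>\<omega>. f \<omega> + c n * indicator (E n) \<omega>))"
      using IH(1) by (meson finite.emptyI finite.insertI finite_SigmaI finite_imageI finite_subset)
    have pre: "(\<lambda>\<omega>. f \<omega> + c n * indicator (E n) \<omega>) -` {y} \<in> A" for y
    proof -
      have "(\<lambda>\<omega>. f \<omega> + c n * indicator (E n) \<omega>) -` {y} = (f -` {y - c n} \<inter> E n) \<union> (f -` {y} \<inter> - E n)"
        by (auto simp: indicator_def)
      moreover have "E n \<in> A" using a by simp
      ultimately show ?thesis using IH(2) assms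
        by (simp add: field_Un field_Int field_Compl)
    qed
    show "finite (range (\<lambda>\<omega>. \<Sum>k<Suc n. c k * indicator (E k) \<omega>)) \<and>
      (\<forall>y. (\<lambda>\<omega>. \<Sum>k<Suc n. c k * indicator (E k) \<omega>) -` {y} \<in> A)"
      unfolding eq using fin pre by blast
  qed
qed

lemma simple_fun_props:
  assumes "field_on A" "simple_fun A s"
  shows "finite (range s)" "s -` {y} \<in> A"
  using assms(2) simple_fun_repr_props[OF assms(1)] unfolding simple_fun_def by blast+

lemma sum_lessThan_add_nat: "(\<Sum>k<n+(m::nat). g k) = (\<Sum>k<n. g k) + (\<Sum>k<m. g (n + k))"
  by (induction m) (auto simp: add.assoc)

lemma simple_fun_lin:
  assumes "simple_fun A s" "simple_fun A t"
  shows "simple_fun A (\<lambda>\<omega>. a * s \<omega> + b * t \<omega>)"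
proof -
  obtain n c E where 1: "\<forall>k<(n::nat). E k \<in> A" "s = (\<lambda>\<omega>. \<Sum>k<n. c k * indicator (E k) \<omega> :: real)"
    using assms(1) unfolding simple_fun_def by blast
  obtain m d F where 2: "\<forall>k<(m::nat). F k \<in> A" "t = (\<lambda>\<omega>. \<Sum>k<m. d k * indicator (F k) \<omega> :: real)"
    using assms(2) unfolding simple_fun_def by blast
  define c' where "c' = (\<lambda>k. if k < n then a * c k else b * d (k - n))"
  define E' where "E' = (\<lambda>k. if k < n then E k else F (k - n))"
  have "\<forall>k<n+m. E' k \<in> A" using 1 2 unfolding E'_def by auto
  moreover have "(\<lambda>\<omega>. a * s \<omega> + b * t \<omega>) = (\<lambda>\<omega>. \<Sum>k<n+m. c' k * indicator (E' k) \<omega>)"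
  proof
    fix \<omega>
    have "(\<Sum>k<n+m. c' k * indicator (E' k) \<omega>) = (\<Sum>k<n. c' k * indicator (E' k) \<omega>) + (\<Sum>k<m. c' (n+k) * indicator (E' (n+k)) \<omega>)"
      by (rule sum_lessThan_add_nat)
    also have "(\<Sum>k<n. c' k * indicator (E' k) \<omega>) = a * s \<omega>"
      unfolding 1 c'_def E'_def by (simp add: sum_distrib_left mult.assoc)
    also have "(\<Sum>k<m. c' (n+k) * indicator (E' (n+k)) \<omega>) = b * t \<omega>"
      unfolding 2 c'_def E'_def by (simp add: sum_distrib_left mult.assoc)
    finally show "a * s \<omega> + b * t \<omega> = (\<Sum>k<n+m. c' k * indicator (E' k) \<omega>)" by simp
  qed
  ultimately show ?thesis unfolding simple_fun_def by blast
qed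

lemma simple_fun_const:
  assumes "field_on A"
  shows "simple_fun A (\<lambda>\<omega>. c)"
  unfolding simple_fun_def
  by (rule exI[of _ 1], rule exI[of _ "\<lambda>_. c"], rule exI[of _ "\<lambda>_. UNIV"])
     (simp add: field_UNIV[OF assms])


abbreviation SI where "SI \<equiv> simple_integral_ba"

lemma SI_partition:
  assumes fA: "field_on A" and g: "gm A \<mu>" and s: "simple_fun A s" and fin: "finite Ps"
    and FA: "\<forall>p\<in>Ps. F p \<in> A" and disj: "\<forall>p\<in>Ps. \<forall>q\<in>Ps. p \<noteq> q \<longrightarrow> F p \<inter> F q = {}"
    and cov: "(\<Union>p\<in>Ps. F p) = UNIV" and val: "\<forall>p\<in>Ps. \<forall>\<omega>\<in>F p. s \<omega> = v p"
  shows "SI \<mu> s = (\<Sum>p\<in>Ps. v p * \<mu> (F p))"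
proof -
  have R: "finite (range s)" and pre: "\<And>y. s -` {y} \<in> A" using simple_fun_props[OF fA s] by auto
  have split: "\<mu> (s -` {y}) = (\<Sum>p\<in>Ps. \<mu> (s -` {y} \<inter> F p))" for y
  proof -
    have "\<mu> (\<Union>p\<in>Ps. s -` {y} \<inter> F p) = (\<Sum>p\<in>Ps. \<mu> (s -` {y} \<inter> F p))"
      by (rule gm_additive[OF g fA fin]) (use FA disj pre field_Int[OF fA] in auto)
    moreover have "(\<Union>p\<in>Ps. s -` {y} \<inter> F p) = s -` {y}" using cov by blast
    ultimately show ?thesis by simp
  qed
  have inner: "(\<Sum>y\<in>range s. y * \<mu> (s -` {y} \<inter> F p)) = v p * \<mu> (F p)" if p: "p \<in> Ps" for p
  proof (cases "F p = {}")
    case True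
    then show ?thesis using gm_empty[OF g fA] by simp
  next
    case False
    then obtain \<omega> where w: "\<omega> \<in> F p" by blast
    have vp: "v p \<in> range s" using val p w by (metis rangeI)
    have "(\<Sum>y\<in>range s. y * \<mu> (s -` {y} \<inter> F p)) = (\<Sum>y\<in>range s. if y = v p then v p * \<mu> (F p) else 0)"
    proof (rule sum.cong)
      fix y assume "y \<in> range s"
      show "y * \<mu> (s -` {y} \<inter> F p) = (if y = v p then v p * \<mu> (F p) else 0)"
      proof (cases "y = v p")
        case True
        then have "s -` {y} \<inter> F p = F p" using val p by auto
        then show ?thesis using True by simp
      next
        case False
        then have "s -` {y} \<inter> F p = {}" using val p by auto
        then show ?thesis using False gm_empty[OF g fA] by simp
      qed
    qed simp
    also have "\<dots> = v p * \<mu> (F p)" using R vp by (simp add: sum.delta)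
    finally show ?thesis .
  qed
  have "SI \<mu> s = (\<Sum>y\<in>range s. \<Sum>p\<in>Ps. y * \<mu> (s -` {y} \<inter> F p))"
    unfolding simple_integral_ba_def split by (simp add: sum_distrib_left)
  also have "\<dots> = (\<Sum>p\<in>Ps. \<Sum>y\<in>range s. y * \<mu> (s -` {y} \<inter> F p))" by (rule sum.swap)
  also have "\<dots> = (\<Sum>p\<in>Ps. v p * \<mu> (F p))" using inner by simp
  finally show ?thesis .
qed

lemma SI_lin:
  assumes fA: "field_on A" and g: "gm A \<mu>" and s: "simple_fun A s" and t: "simple_fun A t"
  shows "SI \<mu> (\<lambda>\<omega>. a * s \<omega> + b * t \<omega>) = a * SI \<mu> s + b * SI \<mu> t"
proof -
  define Ps where "Ps = range s \<times> range t"
  define F where "F = (\<lambda>(y::real, y'::real). s -` {y} \<inter> t -` {y'})"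
  have fin: "finite Ps" unfolding Ps_def using simple_fun_props[OF fA s] simple_fun_props[OF fA t] by simp
  have FA: "\<forall>p\<in>Ps. F p \<in> A" unfolding F_def
    using simple_fun_props(2)[OF fA s] simple_fun_props(2)[OF fA t] field_Int[OF fA] by auto
  have disj: "\<forall>p\<in>Ps. \<forall>q\<in>Ps. p \<noteq> q \<longrightarrow> F p \<inter> F q = {}" unfolding F_def by auto
  have cov: "(\<Union>p\<in>Ps. F p) = UNIV" unfolding F_def Ps_def by auto
  have st: "simple_fun A (\<lambda>\<omega>. a * s \<omega> + b * t \<omega>)" by (rule simple_fun_lin[OF s t])
  have 1: "SI \<mu> s = (\<Sum>p\<in>Ps. fst p * \<mu> (F p))"
    by (rule SI_partition[OF fA g s fin FA disj cov]) (auto simp: F_def)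
  have 2: "SI \<mu> t = (\<Sum>p\<in>Ps. snd p * \<mu> (F p))"
    by (rule SI_partition[OF fA g t fin FA disj cov]) (auto simp: F_def)
  have 3: "SI \<mu> (\<lambda>\<omega>. a * s \<omega> + b * t \<omega>) = (\<Sum>p\<in>Ps. (a * fst p + b * snd p) * \<mu> (F p))"
    by (rule SI_partition[OF fA g st fin FA disj cov]) (auto simp: F_def)
  show ?thesis unfolding 1 2 3
    by (simp add: sum_distrib_left sum.distrib algebra_simps)
qed

lemma SI_const:
  shows "SI \<mu> (\<lambda>\<omega>. c) = c * \<mu> UNIV"
proof -
  have "range (\<lambda>\<omega>::'a. c) = {c}" by auto
  moreover have "(\<lambda>\<omega>::'a. c) -` {c} = UNIV" by auto
  ultimately show ?thesis unfolding simple_integral_ba_def by simp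
qed

lemma SI_bound:
  assumes fA: "field_on A" and g: "gm A \<mu>" and s: "simple_fun A s" and b: "\<forall>\<omega>. \<bar>s \<omega>\<bar> \<le> \<delta>"
  shows "\<bar>SI \<mu> s\<bar> \<le> \<delta> * \<mu> UNIV"
proof -
  have R: "finite (range s)" and pre: "\<And>y. s -` {y} \<in> A" using simple_fun_props[OF fA s] by auto
  have nn: "\<mu> (s -` {y}) \<ge> 0" for y using g pre unfolding gm_def by auto
  have tot: "\<mu> UNIV = (\<Sum>y\<in>range s. \<mu> (s -` {y}))"
  proof -
    have "\<mu> (\<Union>y\<in>range s. s -` {y}) = (\<Sum>y\<in>range s. \<mu> (s -` {y}))"
      by (rule gm_additive[OF g fA R]) (use pre in auto)
    moreover have "(\<Union>y\<in>range s. s -` {y}) = UNIV" by auto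
    ultimately show ?thesis by simp
  qed
  have "\<bar>SI \<mu> s\<bar> \<le> (\<Sum>y\<in>range s. \<bar>y * \<mu> (s -` {y})\<bar>)"
    unfolding simple_integral_ba_def by (rule sum_abs)
  also have "\<dots> \<le> (\<Sum>y\<in>range s. \<delta> * \<mu> (s -` {y}))"
  proof (rule sum_mono)
    fix y assume "y \<in> range s"
    then have "\<bar>y\<bar> \<le> \<delta>" using b by auto
    then show "\<bar>y * \<mu> (s -` {y})\<bar> \<le> \<delta> * \<mu> (s -` {y})"
      using nn[of y] by (simp add: abs_mult mult_right_mono)
  qed
  also have "\<dots> = \<delta> * \<mu> UNIV" unfolding tot by (simp add: sum_distrib_left)
  finally show ?thesis .
qed

lemma SI_measure_comb:
  "SI (\<lambda>E. \<Sum>k<n. l k * Q k E) s = (\<Sum>k<(n::nat). l k * SI (Q k) s)"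
  unfolding simple_integral_ba_def
  by (simp add: sum_distrib_left sum.swap[of _ "range s"] mult.left_commute)

lemma SI_ext:
  assumes "field_on A" "simple_fun A s"
  shows "SI (ext_on A \<mu>) s = SI \<mu> s"
  unfolding simple_integral_ba_def ext_on_def using simple_fun_props(2)[OF assms] by simp


lemma gm_UNIV_nonneg: "gm A \<mu> \<Longrightarrow> field_on A \<Longrightarrow> \<mu> UNIV \<ge> 0"
  unfolding gm_def using field_UNIV by blast

lemma zero_by_eta:
  fixes D K :: real
  assumes "K \<ge> 0" "\<And>\<eta>. \<eta> > 0 \<Longrightarrow> \<bar>D\<bar> \<le> \<eta> * K"
  shows "D = 0"
proof (rule ccontr)
  assume "D \<noteq> 0"
  then have p: "\<bar>D\<bar> > 0" by simp
  have "\<bar>D\<bar> \<le> (\<bar>D\<bar> / (2 * (K + 1))) * K" using assms(2)[of "\<bar>D\<bar> / (2 * (K + 1))"] p assms(1) by simp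
  also have "\<dots> = \<bar>D\<bar> * (K / (2 * (K + 1)))" by simp
  also have "\<dots> < \<bar>D\<bar> * 1"
    using p assms(1) by (intro mult_strict_left_mono) (auto simp: field_simps)
  finally show False by simp
qed

lemma IC:
  assumes fA: "field_on A" and g: "gm A \<mu>" and f: "f \<in> Bfun A"
    and s: "simple_fun A s" and sd: "\<forall>\<omega>. \<bar>f \<omega> - s \<omega>\<bar> \<le> \<delta>"
  shows "\<bar>SI \<mu> s - integral_ba A \<mu> f\<bar> \<le> \<delta> * \<mu> UNIV"
proof -
  define U where "U = \<mu> UNIV"
  have U0: "U \<ge> 0" unfolding U_def by (rule gm_UNIV_nonneg[OF g fA])
  define Ap where "Ap = (\<lambda>s d. simple_fun A s \<and> (\<forall>\<omega>. \<bar>f \<omega> - s \<omega>\<bar> \<le> d))"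
  define S where "S = {SI \<mu> s - d * U | s d. Ap s d}"
  have key: "SI \<mu> s1 - d1 * U \<le> SI \<mu> s2 + d2 * U" if a1: "Ap s1 d1" and a2: "Ap s2 d2" for s1 d1 s2 d2
  proof -
    have ss: "simple_fun A s1" "simple_fun A s2" using a1 a2 unfolding Ap_def by auto
    have "SI \<mu> (\<lambda>\<omega>. 1 * s1 \<omega> + (-1) * s2 \<omega>) = 1 * SI \<mu> s1 + (-1) * SI \<mu> s2"
      by (rule SI_lin[OF fA g ss])
    moreover have "\<bar>SI \<mu> (\<lambda>\<omega>. 1 * s1 \<omega> + (-1) * s2 \<omega>)\<bar> \<le> (d1 + d2) * U"
    proof -
      have "\<forall>\<omega>. \<bar>1 * s1 \<omega> + (-1) * s2 \<omega>\<bar> \<le> d1 + d2"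
      proof
        fix \<omega>
        have "\<bar>f \<omega> - s1 \<omega>\<bar> \<le> d1" "\<bar>f \<omega> - s2 \<omega>\<bar> \<le> d2" using a1 a2 unfolding Ap_def by auto
        then show "\<bar>1 * s1 \<omega> + (-1) * s2 \<omega>\<bar> \<le> d1 + d2" by linarith
      qed
      then show ?thesis unfolding U_def
        by (rule SI_bound[OF fA g simple_fun_lin[OF ss]])
    qed
    ultimately have "SI \<mu> s1 - SI \<mu> s2 \<le> (d1 + d2) * U" by simp
    then show ?thesis by (simp add: algebra_simps)
  qed
  obtain s0 where s0: "simple_fun A s0" "\<forall>\<omega>. \<bar>f \<omega> - s0 \<omega>\<bar> \<le> 1"
    using f unfolding Bfun_def by force
  have A0: "Ap s0 1" unfolding Ap_def using s0 by simp
  have ne: "S \<noteq> {}" unfolding S_def using A0 by blast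
  have bdd: "bdd_above S" unfolding S_def bdd_above_def using key[OF _ A0] by blast
  define L where "L = Sup S"
  have low: "SI \<mu> s1 - d1 * U \<le> L" if "Ap s1 d1" for s1 d1
    unfolding L_def by (rule cSup_upper[OF _ bdd]) (use that S_def in blast)
  have up: "L \<le> SI \<mu> s1 + d1 * U" if "Ap s1 d1" for s1 d1
    unfolding L_def by (rule cSup_least[OF ne]) (use key that S_def in blast)
  have close: "\<bar>SI \<mu> s1 - L\<bar> \<le> d1 * U" if "Ap s1 d1" for s1 d1
    using low[OF that] up[OF that] by linarith
  define P where "P = (\<lambda>r. \<forall>\<epsilon>>0. \<exists>\<delta>>0. \<forall>s. simple_fun A s \<and> (\<forall>\<omega>. \<bar>f \<omega> - s \<omega>\<bar> \<le> \<delta>)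
        \<longrightarrow> \<bar>SI \<mu> s - r\<bar> < \<epsilon>)"
  have PL: "P L" unfolding P_def
  proof (intro allI impI)
    fix \<epsilon> :: real assume e: "\<epsilon> > 0"
    define d where "d = \<epsilon> / (U + 1)"
    have d0: "d > 0" unfolding d_def using e U0 by simp
    have dU: "d * U < \<epsilon>" unfolding d_def using e U0 by (simp add: field_simps)
    show "\<exists>\<delta>>0. \<forall>s. simple_fun A s \<and> (\<forall>\<omega>. \<bar>f \<omega> - s \<omega>\<bar> \<le> \<delta>) \<longrightarrow> \<bar>SI \<mu> s - L\<bar> < \<epsilon>"
      using d0 close dU unfolding Ap_def by (meson le_less_trans)
  qed
  have uniq: "r = L" if Pr: "P r" for r
  proof -
    have "\<bar>r - L\<bar> < 2 * \<epsilon>" if e: "\<epsilon> > 0" for \<epsilon>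
    proof -
      obtain d where d: "d > 0" "\<forall>s. simple_fun A s \<and> (\<forall>\<omega>. \<bar>f \<omega> - s \<omega>\<bar> \<le> d) \<longrightarrow> \<bar>SI \<mu> s - r\<bar> < \<epsilon>"
        using Pr e unfolding P_def by blast
      define d2 where "d2 = min d (\<epsilon> / (U + 1))"
      have d2: "d2 > 0" "d2 \<le> d" "d2 * U < \<epsilon>" unfolding d2_def using d e U0
        by (auto simp: min_def field_simps)
      obtain s1 where s1: "simple_fun A s1" "\<forall>\<omega>. \<bar>f \<omega> - s1 \<omega>\<bar> \<le> d2"
        using f d2(1) unfolding Bfun_def by blast
      have "\<bar>SI \<mu> s1 - r\<bar> < \<epsilon>" proof -
        have "\<forall>\<omega>. \<bar>f \<omega> - s1 \<omega>\<bar> \<le> d" using s1(2) d2(2) order_trans by blast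
        then show ?thesis using d(2) s1(1) by blast
      qed
      moreover have "\<bar>SI \<mu> s1 - L\<bar> \<le> d2 * U" using close s1 unfolding Ap_def by blast
      ultimately show ?thesis using d2(3) by linarith
    qed
    then have h: "\<And>e. e > 0 \<Longrightarrow> \<bar>r - L\<bar> < 2 * e" by blast
    show ?thesis
    proof (rule ccontr)
      assume "r \<noteq> L"
      then have "\<bar>r - L\<bar> > 0" by simp
      from h[OF half_gt_zero[OF this]] show False by simp
    qed
  qed
  have "integral_ba A \<mu> f = L"
    unfolding integral_ba_def using PL uniq unfolding P_def by (rule the_equality)
  then show ?thesis using close[of s \<delta>] s sd unfolding Ap_def U_def by simp
qed


lemma Bfun_simple: "simple_fun A s \<Longrightarrow> s \<in> Bfun A"
  unfolding Bfun_def by force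

lemma Bfun_lin:
  assumes f: "f \<in> Bfun A" and g: "g \<in> Bfun A"
  shows "(\<lambda>\<omega>. a * f \<omega> + b * g \<omega>) \<in> Bfun A"
  unfolding Bfun_def
proof (intro CollectI allI impI)
  fix \<epsilon> :: real assume e: "\<epsilon> > 0"
  define \<eta> where "\<eta> = \<epsilon> / (\<bar>a\<bar> + \<bar>b\<bar> + 1)"
  have eta: "\<eta> > 0" unfolding \<eta>_def using e by (simp add: add_nonneg_pos)
  obtain s where s: "simple_fun A s" "\<forall>\<omega>. \<bar>f \<omega> - s \<omega>\<bar> \<le> \<eta>" using f eta unfolding Bfun_def by blast
  obtain t where t: "simple_fun A t" "\<forall>\<omega>. \<bar>g \<omega> - t \<omega>\<bar> \<le> \<eta>" using g eta unfolding Bfun_def by blast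
  have "\<bar>a * f \<omega> + b * g \<omega> - (a * s \<omega> + b * t \<omega>)\<bar> \<le> \<epsilon>" for \<omega>
  proof -
    have "\<bar>a * f \<omega> + b * g \<omega> - (a * s \<omega> + b * t \<omega>)\<bar> = \<bar>a * (f \<omega> - s \<omega>) + b * (g \<omega> - t \<omega>)\<bar>"
      by (simp add: algebra_simps)
    also have "\<dots> \<le> \<bar>a\<bar> * \<bar>f \<omega> - s \<omega>\<bar> + \<bar>b\<bar> * \<bar>g \<omega> - t \<omega>\<bar>"
      using abs_triangle_ineq[of "a * (f \<omega> - s \<omega>)" "b * (g \<omega> - t \<omega>)"] by (simp add: abs_mult)
    also have "\<dots> \<le> \<bar>a\<bar> * \<eta> + \<bar>b\<bar> * \<eta>"
      using s(2) t(2) by (intro add_mono mult_left_mono) auto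
    also have "\<dots> \<le> (\<bar>a\<bar> + \<bar>b\<bar> + 1) * \<eta>" using eta by (simp add: algebra_simps)
    also have "\<dots> = \<epsilon>" unfolding \<eta>_def by (simp add: add_nonneg_pos)
    finally show ?thesis .
  qed
  then show "\<exists>s. simple_fun A s \<and> (\<forall>\<omega>. \<bar>a * f \<omega> + b * g \<omega> - s \<omega>\<bar> \<le> \<epsilon>)"
    using simple_fun_lin[OF s(1) t(1)] by blast
qed

lemma Bfun_const: "field_on A \<Longrightarrow> (\<lambda>\<omega>. c) \<in> Bfun A"
  by (rule Bfun_simple[OF simple_fun_const])

lemma Bfun_bounded:
  assumes fA: "field_on A" and f: "f \<in> Bfun A"
  shows "\<exists>M. \<forall>\<omega>. \<bar>f \<omega>\<bar> \<le> M"
proof -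
  obtain s where s: "simple_fun A s" "\<forall>\<omega>. \<bar>f \<omega> - s \<omega>\<bar> \<le> 1" using f unfolding Bfun_def
    by force
  have fin: "finite (abs ` range s)" using simple_fun_props(1)[OF fA s(1)] by simp
  have "\<bar>f \<omega>\<bar> \<le> Max (abs ` range s) + 1" for \<omega>
  proof -
    have "\<bar>s \<omega>\<bar> \<le> Max (abs ` range s)" using fin by (intro Max_ge) auto
    then show ?thesis using s(2)[rule_format, of \<omega>] by linarith
  qed
  then show ?thesis by blast
qed

lemma int_lin:
  assumes fA: "field_on A" and g: "gm A \<mu>" and f1: "f \<in> Bfun A" and f2: "h \<in> Bfun A"
  shows "integral_ba A \<mu> (\<lambda>\<omega>. a * f \<omega> + b * h \<omega>) = a * integral_ba A \<mu> f + b * integral_ba A \<mu> h"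
proof -
  define U where "U = \<mu> UNIV"
  have U0: "U \<ge> 0" unfolding U_def by (rule gm_UNIV_nonneg[OF g fA])
  have fh: "(\<lambda>\<omega>. a * f \<omega> + b * h \<omega>) \<in> Bfun A" by (rule Bfun_lin[OF f1 f2])
  define D where "D = integral_ba A \<mu> (\<lambda>\<omega>. a * f \<omega> + b * h \<omega>) - (a * integral_ba A \<mu> f + b * integral_ba A \<mu> h)"
  have "D = 0"
  proof (rule zero_by_eta)
    show "2 * (\<bar>a\<bar> + \<bar>b\<bar>) * U \<ge> 0" using U0 by simp
  next
    fix \<eta> :: real assume eta: "\<eta> > 0"
    obtain s where s: "simple_fun A s" "\<forall>\<omega>. \<bar>f \<omega> - s \<omega>\<bar> \<le> \<eta>" using f1 eta unfolding Bfun_def by blast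
    obtain t where t: "simple_fun A t" "\<forall>\<omega>. \<bar>h \<omega> - t \<omega>\<bar> \<le> \<eta>" using f2 eta unfolding Bfun_def by blast
    have st: "\<forall>\<omega>. \<bar>a * f \<omega> + b * h \<omega> - (a * s \<omega> + b * t \<omega>)\<bar> \<le> (\<bar>a\<bar> + \<bar>b\<bar>) * \<eta>"
    proof
      fix \<omega>
      have "\<bar>a * f \<omega> + b * h \<omega> - (a * s \<omega> + b * t \<omega>)\<bar> = \<bar>a * (f \<omega> - s \<omega>) + b * (h \<omega> - t \<omega>)\<bar>"
        by (simp add: algebra_simps)
      also have "\<dots> \<le> \<bar>a\<bar> * \<bar>f \<omega> - s \<omega>\<bar> + \<bar>b\<bar> * \<bar>h \<omega> - t \<omega>\<bar>"
        using abs_triangle_ineq[of "a * (f \<omega> - s \<omega>)" "b * (h \<omega> - t \<omega>)"] by (simp add: abs_mult)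
      also have "\<dots> \<le> \<bar>a\<bar> * \<eta> + \<bar>b\<bar> * \<eta>"
        using s(2) t(2) by (intro add_mono mult_left_mono) auto
      finally show "\<bar>a * f \<omega> + b * h \<omega> - (a * s \<omega> + b * t \<omega>)\<bar> \<le> (\<bar>a\<bar> + \<bar>b\<bar>) * \<eta>"
        by (simp add: algebra_simps)
    qed
    have 1: "\<bar>SI \<mu> (\<lambda>\<omega>. a * s \<omega> + b * t \<omega>) - integral_ba A \<mu> (\<lambda>\<omega>. a * f \<omega> + b * h \<omega>)\<bar> \<le> (\<bar>a\<bar> + \<bar>b\<bar>) * \<eta> * U"
      unfolding U_def by (rule IC[OF fA g fh simple_fun_lin[OF s(1) t(1)] st])
    have 2: "\<bar>SI \<mu> s - integral_ba A \<mu> f\<bar> \<le> \<eta> * U" unfolding U_def by (rule IC[OF fA g f1 s])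
    have 3: "\<bar>SI \<mu> t - integral_ba A \<mu> h\<bar> \<le> \<eta> * U" unfolding U_def by (rule IC[OF fA g f2 t])
    have 4: "SI \<mu> (\<lambda>\<omega>. a * s \<omega> + b * t \<omega>) = a * SI \<mu> s + b * SI \<mu> t" by (rule SI_lin[OF fA g s(1) t(1)])
    have c2: "\<bar>a * SI \<mu> s - a * integral_ba A \<mu> f\<bar> \<le> \<bar>a\<bar> * (\<eta> * U)"
    proof -
      have "\<bar>a * SI \<mu> s - a * integral_ba A \<mu> f\<bar> = \<bar>a\<bar> * \<bar>SI \<mu> s - integral_ba A \<mu> f\<bar>"
        by (simp add: abs_mult[symmetric] right_diff_distrib)
      then show ?thesis using 2 by (simp add: mult_left_mono)
    qed
    have c3: "\<bar>b * SI \<mu> t - b * integral_ba A \<mu> h\<bar> \<le> \<bar>b\<bar> * (\<eta> * U)"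
    proof -
      have "\<bar>b * SI \<mu> t - b * integral_ba A \<mu> h\<bar> = \<bar>b\<bar> * \<bar>SI \<mu> t - integral_ba A \<mu> h\<bar>"
        by (simp add: abs_mult[symmetric] right_diff_distrib)
      then show ?thesis using 3 by (simp add: mult_left_mono)
    qed
    have "\<bar>D\<bar> \<le> (\<bar>a\<bar> + \<bar>b\<bar>) * \<eta> * U + \<bar>a\<bar> * (\<eta> * U) + \<bar>b\<bar> * (\<eta> * U)"
      using 1 c2 c3 unfolding D_def 4 by linarith
    also have "\<dots> = \<eta> * (2 * (\<bar>a\<bar> + \<bar>b\<bar>) * U)" by (simp add: algebra_simps)
    finally show "\<bar>D\<bar> \<le> \<eta> * (2 * (\<bar>a\<bar> + \<bar>b\<bar>) * U)" .
  qed
  then show ?thesis unfolding D_def by simp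
qed

lemma int_const:
  assumes fA: "field_on A" and g: "gm A \<mu>"
  shows "integral_ba A \<mu> (\<lambda>\<omega>. c) = c * \<mu> UNIV"
proof -
  have "\<bar>SI \<mu> (\<lambda>\<omega>. c) - integral_ba A \<mu> (\<lambda>\<omega>. c)\<bar> \<le> 0 * \<mu> UNIV"
    by (rule IC[OF fA g Bfun_const[OF fA] simple_fun_const[OF fA]]) simp
  then show ?thesis using SI_const[of \<mu> c] by simp
qed

lemma int_sum:
  assumes fA: "field_on A" and g: "gm A \<mu>" and fin: "finite I" and fs: "\<forall>i\<in>I. f i \<in> Bfun A"
  shows "(\<lambda>\<omega>. \<Sum>i\<in>I. c i * f i \<omega>) \<in> Bfun A \<and>
         integral_ba A \<mu> (\<lambda>\<omega>. \<Sum>i\<in>I. c i * f i \<omega>) = (\<Sum>i\<in>I. c i * integral_ba A \<mu> (f i))"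
  using fin fs
proof (induction I rule: finite_induct)
  case empty
  show ?case using Bfun_const[OF fA, of 0] int_const[OF fA g, of 0] by simp
next
  case (insert j I)
  have IH: "(\<lambda>\<omega>. \<Sum>i\<in>I. c i * f i \<omega>) \<in> Bfun A"
     "integral_ba A \<mu> (\<lambda>\<omega>. \<Sum>i\<in>I. c i * f i \<omega>) = (\<Sum>i\<in>I. c i * integral_ba A \<mu> (f i))"
    using insert by auto
  have fj: "f j \<in> Bfun A" using insert by simp
  have eq: "(\<lambda>\<omega>. \<Sum>i\<in>insert j I. c i * f i \<omega>) = (\<lambda>\<omega>. c j * f j \<omega> + 1 * (\<Sum>i\<in>I. c i * f i \<omega>))"
    using insert(1,2) by simp
  show ?case unfolding eq
    using Bfun_lin[OF fj IH(1), of "c j" 1] int_lin[OF fA g fj IH(1), of "c j" 1] IH(2) insert(1,2) by simp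
qed

lemma int_bound:
  assumes fA: "field_on A" and g: "gm A \<mu>" and f: "f \<in> Bfun A" and M: "\<forall>\<omega>. \<bar>f \<omega>\<bar> \<le> M"
  shows "\<bar>integral_ba A \<mu> f\<bar> \<le> (M + 2) * \<mu> UNIV"
proof -
  obtain s where s: "simple_fun A s" "\<forall>\<omega>. \<bar>f \<omega> - s \<omega>\<bar> \<le> 1" using f unfolding Bfun_def
    by force
  have "\<forall>\<omega>. \<bar>s \<omega>\<bar> \<le> M + 1" proof
    fix \<omega> show "\<bar>s \<omega>\<bar> \<le> M + 1" using s(2)[rule_format, of \<omega>] M[rule_format, of \<omega>] by linarith
  qed
  then have "\<bar>SI \<mu> s\<bar> \<le> (M + 1) * \<mu> UNIV" by (rule SI_bound[OF fA g s(1)])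
  moreover have "\<bar>SI \<mu> s - integral_ba A \<mu> f\<bar> \<le> 1 * \<mu> UNIV" by (rule IC[OF fA g f s])
  ultimately show ?thesis by (simp add: algebra_simps)
qed

lemma int_ext:
  assumes fA: "field_on A"
  shows "integral_ba A (ext_on A \<mu>) f = integral_ba A \<mu> f"
proof -
  have "\<And>s. simple_fun A s \<Longrightarrow> SI (ext_on A \<mu>) s = SI \<mu> s" using SI_ext[OF fA] by blast
  then have "(\<lambda>r. \<forall>\<epsilon>>0. \<exists>\<delta>>0. \<forall>s. simple_fun A s \<and> (\<forall>\<omega>. \<bar>f \<omega> - s \<omega>\<bar> \<le> \<delta>)
        \<longrightarrow> \<bar>SI (ext_on A \<mu>) s - r\<bar> < \<epsilon>) = (\<lambda>r. \<forall>\<epsilon>>0. \<exists>\<delta>>0. \<forall>s. simple_fun A s \<and> (\<forall>\<omega>. \<bar>f \<omega> - s \<omega>\<bar> \<le> \<delta>)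
        \<longrightarrow> \<bar>SI \<mu> s - r\<bar> < \<epsilon>)" by (intro ext) (metis (no_types, lifting))
  then show ?thesis unfolding integral_ba_def by simp
qed

lemma gm_comb:
  assumes "\<forall>k<n. gm A (Q k) \<and> l k \<ge> 0"
  shows "gm A (\<lambda>E. \<Sum>k<(n::nat). l k * Q k E)"
  using assms unfolding gm_def
  by (auto simp: sum.distrib[symmetric] distrib_left intro!: sum.cong sum_nonneg)

lemma int_measure_comb:
  assumes fA: "field_on A" and Q: "\<forall>k<n. gm A (Q k) \<and> l k \<ge> 0" and f: "f \<in> Bfun A"
  shows "integral_ba A (\<lambda>E. \<Sum>k<(n::nat). l k * Q k E) f = (\<Sum>k<n. l k * integral_ba A (Q k) f)"
proof -
  define \<nu> where "\<nu> = (\<lambda>E. \<Sum>k<(n::nat). l k * Q k E)"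
  have g: "gm A \<nu>" unfolding \<nu>_def by (rule gm_comb[OF Q])
  have U0: "\<nu> UNIV \<ge> 0" by (rule gm_UNIV_nonneg[OF g fA])
  define D where "D = integral_ba A \<nu> f - (\<Sum>k<n. l k * integral_ba A (Q k) f)"
  have "D = 0"
  proof (rule zero_by_eta)
    show "2 * \<nu> UNIV \<ge> 0" using U0 by simp
  next
    fix \<eta> :: real assume eta: "\<eta> > 0"
    obtain s where s: "simple_fun A s" "\<forall>\<omega>. \<bar>f \<omega> - s \<omega>\<bar> \<le> \<eta>" using f eta unfolding Bfun_def by blast
    have 1: "\<bar>SI \<nu> s - integral_ba A \<nu> f\<bar> \<le> \<eta> * \<nu> UNIV" by (rule IC[OF fA g f s])
    have 2: "SI \<nu> s = (\<Sum>k<n. l k * SI (Q k) s)" unfolding \<nu>_def by (rule SI_measure_comb)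
    have "\<bar>(\<Sum>k<n. l k * SI (Q k) s) - (\<Sum>k<n. l k * integral_ba A (Q k) f)\<bar>
         \<le> (\<Sum>k<n. \<bar>l k * SI (Q k) s - l k * integral_ba A (Q k) f\<bar>)"
      unfolding sum_subtractf[symmetric] by (rule sum_abs)
    also have "\<dots> \<le> (\<Sum>k<n. l k * (\<eta> * Q k UNIV))"
    proof (rule sum_mono)
      fix k assume "k \<in> {..<n}"
      then have gk: "gm A (Q k)" "l k \<ge> 0" using Q by auto
      have "\<bar>SI (Q k) s - integral_ba A (Q k) f\<bar> \<le> \<eta> * Q k UNIV" by (rule IC[OF fA gk(1) f s])
      then show "\<bar>l k * SI (Q k) s - l k * integral_ba A (Q k) f\<bar> \<le> l k * (\<eta> * Q k UNIV)"
      proof -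
        have "\<bar>l k * SI (Q k) s - l k * integral_ba A (Q k) f\<bar> = l k * \<bar>SI (Q k) s - integral_ba A (Q k) f\<bar>"
          using gk(2) by (simp add: abs_mult right_diff_distrib[symmetric])
        then show ?thesis using gk(2) \<open>\<bar>SI (Q k) s - integral_ba A (Q k) f\<bar> \<le> \<eta> * Q k UNIV\<close> by (simp add: mult_left_mono)
      qed
    qed
    also have "\<dots> = \<eta> * \<nu> UNIV" unfolding \<nu>_def by (simp add: sum_distrib_left algebra_simps)
    finally have 3: "\<bar>SI \<nu> s - (\<Sum>k<n. l k * integral_ba A (Q k) f)\<bar> \<le> \<eta> * \<nu> UNIV" using 2 by simp
    show "\<bar>D\<bar> \<le> \<eta> * (2 * \<nu> UNIV)" using 1 3 unfolding D_def by linarith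
  qed
  then show ?thesis unfolding D_def \<nu>_def by simp
qed


lemma sep:
  fixes V :: "('g \<Rightarrow> real) set" and z :: "'g \<Rightarrow> real"
  assumes fin: "finite G" and Vne: "V \<noteq> {}" and bnd: "\<forall>v\<in>V. \<forall>g\<in>G. \<bar>v g\<bar> \<le> C" and e: "\<epsilon> > 0"
    and far: "\<And>n l Q. n \<ge> 1 \<Longrightarrow> (\<forall>k<n. l k \<ge> 0 \<and> Q k \<in> V) \<Longrightarrow> (\<Sum>k<n. l k) = 1 \<Longrightarrow>
         \<exists>g\<in>G. \<bar>z g - (\<Sum>k<(n::nat). l k * Q k g)\<bar> \<ge> \<epsilon>"
  shows "\<exists>a b. (\<Sum>g\<in>G. a g * z g) < b \<and> (\<forall>v\<in>V. (\<Sum>g\<in>G. a g * v g) \<ge> b)"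
proof -
  define K where "K = {x. \<exists>n l Q. n \<ge> 1 \<and> (\<forall>k<n. l k \<ge> 0 \<and> Q k \<in> V) \<and> (\<Sum>k<n. l k) = 1 \<and>
      x = (\<lambda>g. \<Sum>k<(n::nat). l k * Q k g)}"
  define h where "h = (\<lambda>x. \<Sum>g\<in>G. (z g - x g)^2)"
  have hnn: "h x \<ge> 0" for x unfolding h_def by (simp add: sum_nonneg)
  have K1: "h x \<ge> \<epsilon>^2" if xK: "x \<in> K" for x
  proof -
    obtain n l Q where nlQ: "n \<ge> 1" "\<forall>k<n. l k \<ge> 0 \<and> Q k \<in> V" "(\<Sum>k<n. l k) = 1"
      "x = (\<lambda>g. \<Sum>k<(n::nat). l k * Q k g)" using xK unfolding K_def by blast
    obtain g where g: "g \<in> G" "\<bar>z g - x g\<bar> \<ge> \<epsilon>" using far[OF nlQ(1-3)] nlQ(4) by auto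
    have "\<epsilon>^2 \<le> \<bar>z g - x g\<bar>^2" using g(2) e by (intro power_mono) auto
    also have "\<dots> = (z g - x g)^2" by simp
    also have "\<dots> \<le> h x" unfolding h_def using fin g(1) by (intro member_le_sum) auto
    finally show ?thesis .
  qed
  have K2: "\<bar>x g\<bar> \<le> C" if xK: "x \<in> K" and gG: "g \<in> G" for x g
  proof -
    obtain n l Q where nlQ: "n \<ge> 1" "\<forall>k<n. l k \<ge> 0 \<and> Q k \<in> V" "(\<Sum>k<n. l k) = 1"
      "x = (\<lambda>g. \<Sum>k<(n::nat). l k * Q k g)" using xK unfolding K_def by blast
    have "\<bar>x g\<bar> \<le> (\<Sum>k<n. \<bar>l k * Q k g\<bar>)" unfolding nlQ(4) by (rule sum_abs)
    also have "\<dots> \<le> (\<Sum>k<n. l k * C)"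
    proof (rule sum_mono)
      fix k assume "k \<in> {..<n}"
      then have "l k \<ge> 0" "\<bar>Q k g\<bar> \<le> C" using nlQ(2) bnd gG by auto
      then show "\<bar>l k * Q k g\<bar> \<le> l k * C" by (simp add: abs_mult mult_left_mono)
    qed
    also have "\<dots> = C" using nlQ(3) by (simp add: sum_distrib_right[symmetric])
    finally show ?thesis .
  qed
  have K3: "(\<lambda>g. (1 - u) * x g + u * v g) \<in> K" if xK: "x \<in> K" and vV: "v \<in> V" and u01: "0 \<le> u" "u \<le> 1" for x v u
  proof -
    obtain n l Q where nlQ: "n \<ge> 1" "\<forall>k<n. l k \<ge> 0 \<and> Q k \<in> V" "(\<Sum>k<n. l k) = 1"
      "x = (\<lambda>g. \<Sum>k<(n::nat). l k * Q k g)" using xK unfolding K_def by blast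
    define l' where "l' = (\<lambda>k. if k < n then (1 - u) * l k else u)"
    define Q' where "Q' = (\<lambda>k. if k < n then Q k else v)"
    have "Suc n \<ge> 1" by simp
    moreover have "\<forall>k<Suc n. l' k \<ge> 0 \<and> Q' k \<in> V" using nlQ(2) vV u01 unfolding l'_def Q'_def
      by (auto simp: less_Suc_eq)
    moreover have "(\<Sum>k<Suc n. l' k) = 1"
    proof -
      have "(\<Sum>k<n. l' k) = (\<Sum>k<n. (1 - u) * l k)" unfolding l'_def by (rule sum.cong) auto
      then show ?thesis using nlQ(3) by (simp add: l'_def sum_distrib_left[symmetric])
    qed
    moreover have "(\<lambda>g. (1 - u) * x g + u * v g) = (\<lambda>g. \<Sum>k<Suc n. l' k * Q' k g)"
    proof
      fix g
      have "(\<Sum>k<n. l' k * Q' k g) = (\<Sum>k<n. (1 - u) * (l k * Q k g))" unfolding l'_def Q'_def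
        by (rule sum.cong) auto
      then show "(1 - u) * x g + u * v g = (\<Sum>k<Suc n. l' k * Q' k g)"
        unfolding nlQ(4) by (simp add: l'_def Q'_def sum_distrib_left)
    qed
    ultimately show ?thesis unfolding K_def by blast
  qed
  have K4: "V \<subseteq> K"
  proof
    fix v assume v: "v \<in> V"
    have "v = (\<lambda>g. \<Sum>k<(1::nat). (\<lambda>_. 1::real) k * (\<lambda>_. v) k g)" by simp
    then show "v \<in> K" unfolding K_def using v by (intro CollectI exI[of _ "1::nat"] exI[of _ "\<lambda>_. 1::real"] exI[of _ "\<lambda>_. v"]) auto
  qed
  define C' where "C' = \<bar>C\<bar>"
  define D where "D = real (card G) * (2 * C')^2"
  have D0: "D \<ge> 0" unfolding D_def by simp
  have Sb: "(\<Sum>g\<in>G. (v g - x g)^2) \<le> D" if "x \<in> K" "v \<in> V" for x v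
  proof -
    have "(v g - x g)^2 \<le> (2 * C')^2" if g: "g \<in> G" for g
    proof -
      have "\<bar>v g - x g\<bar> \<le> 2 * C'" using K2[OF \<open>x \<in> K\<close> g] bnd \<open>v \<in> V\<close> g unfolding C'_def by force
      then have "\<bar>v g - x g\<bar>^2 \<le> (2 * C')^2" by (intro power_mono) auto
      then show ?thesis by simp
    qed
    then show ?thesis unfolding D_def by (rule sum_bounded_above)
  qed
  have Kne: "h ` K \<noteq> {}" using K4 Vne by blast
  have bdd: "bdd_below (h ` K)" using hnn by (intro bdd_belowI[of _ 0]) auto
  define d where "d = Inf (h ` K)"
  define u where "u = min 1 (\<epsilon>^2 / (2 * (D + 1)))"
  have u0: "u > 0" "u \<le> 1" unfolding u_def using e D0 by auto
  have uD: "u * (D + 1) \<le> \<epsilon>^2 / 2"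
  proof -
    have "u \<le> \<epsilon>^2 / (2 * (D + 1))" unfolding u_def by simp
    then have "u * (D + 1) \<le> \<epsilon>^2 / (2 * (D + 1)) * (D + 1)" using D0 by (intro mult_right_mono) auto
    also have "\<dots> = \<epsilon>^2 / 2" using D0 by (simp add: field_simps)
    finally show ?thesis .
  qed
  define \<eta> where "\<eta> = u * \<epsilon>^2 / 2"
  have eta: "\<eta> > 0" unfolding \<eta>_def using u0 e by simp
  have "Inf (h ` K) < d + \<eta>" unfolding d_def using eta by simp
  then obtain y where y: "y \<in> K" "h y < d + \<eta>" using cInf_lessD[OF Kne] by blast
  define a where "a = (\<lambda>g. y g - z g)"
  define b where "b = (\<Sum>g\<in>G. a g * y g) - \<epsilon>^2 / 2"
  have ay: "(\<Sum>g\<in>G. a g * y g) - (\<Sum>g\<in>G. a g * z g) = h y"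
    unfolding sum_subtractf[symmetric] h_def a_def
    by (rule sum.cong) (auto simp: power2_eq_square algebra_simps)
  have i: "(\<Sum>g\<in>G. a g * z g) < b"
  proof -
    have "\<epsilon>^2 > 0" using e by simp
    then show ?thesis using ay K1[OF y(1)] unfolding b_def by linarith
  qed
  have ii: "(\<Sum>g\<in>G. a g * v g) \<ge> b" if v: "v \<in> V" for v
  proof -
    define yu where "yu = (\<lambda>g. (1 - u) * y g + u * v g)"
    have yu: "yu \<in> K" unfolding yu_def using K3[OF y(1) v] u0 by simp
    have dl: "d \<le> h yu" unfolding d_def using yu bdd by (intro cInf_lower) auto
    define P where "P = (\<Sum>g\<in>G. (z g - y g) * (v g - y g))"
    define S where "S = (\<Sum>g\<in>G. (v g - y g)^2)"
    have exp: "h yu = h y - 2 * u * P + u^2 * S"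
    proof -
      have "h yu = (\<Sum>g\<in>G. (z g - y g)^2 - 2 * u * ((z g - y g) * (v g - y g)) + u^2 * (v g - y g)^2)"
        unfolding h_def yu_def by (rule sum.cong) (auto simp: power2_eq_square algebra_simps)
      also have "\<dots> = h y - 2 * u * P + u^2 * S"
        unfolding h_def P_def S_def by (simp add: sum.distrib sum_subtractf sum_distrib_left)
      finally show ?thesis .
    qed
    have SD: "S \<le> D" unfolding S_def by (rule Sb[OF y(1) v])
    have "u^2 * S \<le> u^2 * D" using SD by (intro mult_left_mono) auto
    then have "2 * u * P < \<eta> + u^2 * D" using exp dl y(2) by linarith
    then have "u * (2 * P) < u * (\<epsilon>^2 / 2 + u * D)" unfolding \<eta>_def by (simp add: algebra_simps power2_eq_square)
    then have "2 * P < \<epsilon>^2 / 2 + u * D" using u0 by simp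
    moreover have "u * D \<le> \<epsilon>^2 / 2" using uD u0 by (simp add: algebra_simps)
    ultimately have P: "P < \<epsilon>^2 / 2" by linarith
    have "(\<Sum>g\<in>G. a g * v g) - (\<Sum>g\<in>G. a g * y g) = - P"
      unfolding sum_subtractf[symmetric] P_def a_def sum_negf[symmetric]
      by (rule sum.cong) (auto simp: algebra_simps)
    then show ?thesis using P unfolding b_def by linarith
  qed
  show ?thesis using i ii by blast
qed


lemma gm_ext: "field_on A \<Longrightarrow> gm A \<mu> \<Longrightarrow> gm A (ext_on A \<mu>)"
  unfolding gm_def ext_on_def by (auto simp: field_Un)

lemma pba_ext: "field_on A \<Longrightarrow> pba A P \<Longrightarrow> pba A (ext_on A P)"
  unfolding pba_def ext_on_def by (auto simp: field_Un field_UNIV)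

lemma ba_ext:
  assumes fA: "field_on A" and P: "pba A P"
  shows "ba A (ext_on A P)"
proof -
  have g: "gm A P" using P by (rule gm_pba)
  have "\<forall>E\<in>A. \<bar>ext_on A P E\<bar> \<le> 1"
  proof
    fix E assume E: "E \<in> A"
    have "P E \<ge> 0" using g E unfolding gm_def by auto
    moreover have "P E \<le> P UNIV" by (rule gm_mono_UNIV[OF g fA E])
    ultimately show "\<bar>ext_on A P E\<bar> \<le> 1" using P E unfolding pba_def ext_on_def by simp
  qed
  moreover have "\<forall>E\<in>A. \<forall>F\<in>A. E \<inter> F = {} \<longrightarrow> ext_on A P (E \<union> F) = ext_on A P E + ext_on A P F"
    using P fA unfolding pba_def ext_on_def by (simp add: field_Un)
  moreover have "\<forall>E. E \<notin> A \<longrightarrow> ext_on A P E = 0" unfolding ext_on_def by simp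
  ultimately show ?thesis unfolding ba_def by blast
qed

lemma outer_inf_ext: "outer_inf (ext_on A P) A S = outer_inf P A S"
proof -
  have "{ext_on A P E | E. E \<in> A \<and> S \<subseteq> E} = {P E | E. E \<in> A \<and> S \<subseteq> E}"
    unfolding ext_on_def by auto
  then show ?thesis unfolding outer_inf_def by simp
qed

lemma semi_bet_nonneg:
  assumes "semi_bet A t I f" "i \<in> I"
  shows "integral_ba A (t i \<omega>) (f i) \<ge> 0"
proof -
  obtain S where "cc_component A t I S" "\<omega> \<in> S" "S \<subseteq> {\<omega>'. \<forall>i\<in>I. integral_ba A (t i \<omega>') (f i) \<ge> 0}"
    using assms(1) unfolding semi_bet_def commonly_certain_def by blast
  then show ?thesis using assms(2) by blast
qed

lemma Pi_nonneg:
  assumes fA: "field_on A" and tp: "\<forall>\<omega>. pba A (t i \<omega>)" and f: "f \<in> Bfun A"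
    and nn: "\<forall>\<omega>. integral_ba A (t i \<omega>) f \<ge> 0" and P: "P \<in> Pi_set A t i"
  shows "integral_ba A P f \<ge> 0"
proof (rule ccontr)
  assume neg: "\<not> integral_ba A P f \<ge> 0"
  define \<epsilon> where "\<epsilon> = - integral_ba A P f"
  have e: "\<epsilon> > 0" using neg unfolding \<epsilon>_def by simp
  obtain \<nu> where \<nu>: "\<nu> \<in> conv_hull {ext_on A (t i \<omega>) | \<omega>. True}"
    "\<bar>integral_ba A P f - integral_ba A \<nu> f\<bar> < \<epsilon>"
  proof -
    have W: "\<forall>G. finite G \<longrightarrow> G \<subseteq> Bfun A \<longrightarrow> (\<forall>\<epsilon>>0. \<exists>\<nu>\<in>conv_hull {ext_on A (t i \<omega>) | \<omega>. True}. \<forall>g\<in>G.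
        \<bar>integral_ba A P g - integral_ba A \<nu> g\<bar> < \<epsilon>)"
      using P unfolding Pi_set_def wstar_closure_def by blast
    have "finite {f}" "{f} \<subseteq> Bfun A" using f by auto
    then have "\<exists>\<nu>\<in>conv_hull {ext_on A (t i \<omega>) | \<omega>. True}. \<forall>g\<in>{f}.
        \<bar>integral_ba A P g - integral_ba A \<nu> g\<bar> < \<epsilon>" using W e by blast
    then show ?thesis using that by blast
  qed
  obtain n l Q where nlQ: "n \<ge> 1" "\<forall>k<n. l k \<ge> 0 \<and> Q k \<in> {ext_on A (t i \<omega>) | \<omega>. True}"
    "\<nu> = (\<lambda>E. \<Sum>k<(n::nat). l k * Q k E)"
    using \<nu>(1) unfolding conv_hull_def by blast
  have gQ: "\<forall>k<n. gm A (Q k) \<and> l k \<ge> 0"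
  proof (intro allI impI)
    fix k assume "k < n"
    then obtain \<omega> where "Q k = ext_on A (t i \<omega>)" "l k \<ge> 0" using nlQ(2) by auto
    then show "gm A (Q k) \<and> l k \<ge> 0" using gm_ext[OF fA gm_pba[OF tp[rule_format, of \<omega>]]] by simp
  qed
  have "integral_ba A \<nu> f = (\<Sum>k<n. l k * integral_ba A (Q k) f)"
    unfolding nlQ(3) by (rule int_measure_comb[OF fA gQ f])
  also have "\<dots> \<ge> 0"
  proof (rule sum_nonneg)
    fix k assume "k \<in> {..<n}"
    then obtain \<omega> where "Q k = ext_on A (t i \<omega>)" "l k \<ge> 0" using nlQ(2) by auto
    then show "l k * integral_ba A (Q k) f \<ge> 0" using int_ext[OF fA] nn by simp
  qed
  finally show False using \<nu>(2) unfolding \<epsilon>_def by linarith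
qed


lemma dir1:
  assumes fA: "field_on A" and tp: "\<forall>i\<in>N. \<forall>\<omega>. pba A (t i \<omega>)"
    and UC: "universally_consistent N A M t" and MP: "universal_money_pump N A M t"
  shows False
proof -
  obtain I S where IS: "finite I" "I \<subseteq> N" "cc_component A t I S"
    and H: "\<forall>P. pba A P \<and> outer_inf P A S > 0 \<longrightarrow>
           (\<exists>f. semi_bet A t I f \<and> integral_ba A P (\<lambda>\<omega>. \<Sum>i\<in>I. f i \<omega>) < 0)"
    using MP unfolding universal_money_pump_def by blast
  obtain P where P: "pba A P" "\<forall>i\<in>I. P \<in> Pi_set A t i" "outer_inf P A S > 0"
    using UC IS unfolding universally_consistent_def by blast
  obtain f where f: "semi_bet A t I f" "integral_ba A P (\<lambda>\<omega>. \<Sum>i\<in>I. f i \<omega>) < 0"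
    using H P by blast
  have fB: "\<forall>i\<in>I. f i \<in> Bfun A" using f(1) unfolding semi_bet_def by blast
  have nn: "integral_ba A P (f i) \<ge> 0" if i: "i \<in> I" for i
  proof (rule Pi_nonneg[OF fA])
    show "\<forall>\<omega>. pba A (t i \<omega>)" using tp IS(2) i by blast
    show "f i \<in> Bfun A" using fB i by blast
    show "\<forall>\<omega>. integral_ba A (t i \<omega>) (f i) \<ge> 0" using semi_bet_nonneg[OF f(1) i] by blast
    show "P \<in> Pi_set A t i" using P(2) i by blast
  qed
  have "integral_ba A P (\<lambda>\<omega>. \<Sum>i\<in>I. f i \<omega>) = (\<Sum>i\<in>I. integral_ba A P (f i))"
    using int_sum[OF fA gm_pba[OF P(1)] IS(1) fB, where c="\<lambda>_. 1"] by simp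
  also have "\<dots> \<ge> 0" using nn by (simp add: sum_nonneg)
  finally show False using f(2) by simp
qed

lemma dir2:
  assumes fA: "field_on A" and tp: "\<forall>i\<in>N. \<forall>\<omega>. pba A (t i \<omega>)"
    and nUC: "\<not> universally_consistent N A M t"
  shows "universal_money_pump N A M t"
proof -
  obtain I S where IS: "finite I" "I \<subseteq> N" "cc_component A t I S"
    and noP: "\<forall>P. pba A P \<and> (\<forall>i\<in>I. P \<in> Pi_set A t i) \<longrightarrow> \<not> outer_inf P A S > 0"
    using nUC unfolding universally_consistent_def by blast
  have "\<exists>f. semi_bet A t I f \<and> integral_ba A P (\<lambda>\<omega>. \<Sum>i\<in>I. f i \<omega>) < 0"
    if P: "pba A P" "outer_inf P A S > 0" for P
  proof -
    define P' where "P' = ext_on A P"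
    have P': "pba A P'" unfolding P'_def by (rule pba_ext[OF fA P(1)])
    have "outer_inf P' A S > 0" unfolding P'_def outer_inf_ext by (rule P(2))
    then obtain i where i: "i \<in> I" "P' \<notin> Pi_set A t i" using noP P' by blast
    have ti: "\<forall>\<omega>. pba A (t i \<omega>)" using tp IS(2) i(1) by blast
    have baP': "ba A P'" unfolding P'_def by (rule ba_ext[OF fA P(1)])
    define X where "X = conv_hull {ext_on A (t i \<omega>) | \<omega>. True}"
    have "\<not> (\<forall>G. finite G \<longrightarrow> G \<subseteq> Bfun A \<longrightarrow> (\<forall>\<epsilon>>0. \<exists>\<nu>\<in>X. \<forall>f\<in>G.
        \<bar>integral_ba A P' f - integral_ba A \<nu> f\<bar> < \<epsilon>))"
      using i(2) baP' unfolding Pi_set_def wstar_closure_def X_def by blast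
    then obtain G \<epsilon> where G: "finite G" "G \<subseteq> Bfun A" "\<epsilon> > 0"
      and farX: "\<forall>\<nu>\<in>X. \<exists>g\<in>G. \<bar>integral_ba A P' g - integral_ba A \<nu> g\<bar> \<ge> \<epsilon>"
      by (auto simp: not_less)
    define V where "V = {(\<lambda>g. integral_ba A (t i \<omega>) g) | \<omega>. True}"
    define z where "z = (\<lambda>g. integral_ba A P' g)"
    have Vne: "V \<noteq> {}" unfolding V_def by blast
    have "\<forall>g\<in>G. \<exists>Mg. \<forall>\<omega>. \<bar>g \<omega>\<bar> \<le> Mg" using G(2) Bfun_bounded[OF fA] by blast
    then obtain Mf where Mf: "\<forall>g\<in>G. \<forall>\<omega>. \<bar>g \<omega>\<bar> \<le> Mf g" by metis
    define C where "C = (\<Sum>g\<in>G. \<bar>Mf g + 2\<bar>)"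
    have bnd: "\<forall>v\<in>V. \<forall>g\<in>G. \<bar>v g\<bar> \<le> C"
    proof (intro ballI)
      fix v g assume v: "v \<in> V" and g: "g \<in> G"
      then obtain \<omega> where \<omega>: "v = (\<lambda>g. integral_ba A (t i \<omega>) g)" unfolding V_def by blast
      have "\<bar>integral_ba A (t i \<omega>) g\<bar> \<le> (Mf g + 2) * t i \<omega> UNIV"
        using int_bound[OF fA gm_pba[OF ti[rule_format]]] G(2) g Mf by blast
      also have "\<dots> = Mf g + 2" using ti unfolding pba_def by simp
      also have "\<dots> \<le> \<bar>Mf g + 2\<bar>" by simp
      also have "\<dots> \<le> C" unfolding C_def using G(1) g by (intro member_le_sum) auto
      finally show "\<bar>v g\<bar> \<le> C" using \<omega> by simp
    qed
    have far: "\<exists>g\<in>G. \<bar>z g - (\<Sum>k<n. l k * Q k g)\<bar> \<ge> \<epsilon>"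
      if n: "n \<ge> 1" and lQ: "\<forall>k<n. l k \<ge> 0 \<and> Q k \<in> V" and l1: "(\<Sum>k<n. l k) = 1" for n :: nat and l Q
    proof -
      have "\<forall>k<n. \<exists>\<omega>. Q k = (\<lambda>g. integral_ba A (t i \<omega>) g)" using lQ unfolding V_def by blast
      then obtain w where w: "\<forall>k<n. Q k = (\<lambda>g. integral_ba A (t i (w k)) g)" by metis
      define \<nu> where "\<nu> = (\<lambda>E. \<Sum>k<n. l k * ext_on A (t i (w k)) E)"
      have "\<nu> \<in> X" unfolding X_def conv_hull_def \<nu>_def
        by (intro CollectI exI[of _ n] exI[of _ l] exI[of _ "\<lambda>k. ext_on A (t i (w k))"]) (use n lQ l1 in auto)
      then obtain g where g: "g \<in> G" "\<bar>integral_ba A P' g - integral_ba A \<nu> g\<bar> \<ge> \<epsilon>" using farX by blast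
      have gQ: "\<forall>k<n. gm A (ext_on A (t i (w k))) \<and> l k \<ge> 0"
        using lQ gm_ext[OF fA gm_pba[OF ti[rule_format]]] by blast
      have "integral_ba A \<nu> g = (\<Sum>k<n. l k * integral_ba A (ext_on A (t i (w k))) g)"
        unfolding \<nu>_def by (rule int_measure_comb[OF fA gQ]) (use g G(2) in blast)
      also have "\<dots> = (\<Sum>k<n. l k * Q k g)"
        by (rule sum.cong) (use w int_ext[OF fA] in auto)
      finally show ?thesis using g unfolding z_def by auto
    qed
    obtain a b where ab: "(\<Sum>g\<in>G. a g * z g) < b" "\<forall>v\<in>V. (\<Sum>g\<in>G. a g * v g) \<ge> b"
      using sep[OF G(1) Vne bnd G(3) far] by blast
    define F where "F = (\<lambda>\<omega>. 1 * (\<Sum>g\<in>G. a g * g \<omega>) + (- b) * (\<lambda>_. 1::real) \<omega>)"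
    have sB: "(\<lambda>\<omega>. \<Sum>g\<in>G. a g * g \<omega>) \<in> Bfun A"
      using int_sum[OF fA gm_pba[OF P'] G(1), of id a] G(2) by auto
    have FB: "F \<in> Bfun A" unfolding F_def by (rule Bfun_lin[OF sB Bfun_const[OF fA]])
    have intF: "integral_ba A \<mu> F = (\<Sum>g\<in>G. a g * integral_ba A \<mu> g) - b" if "pba A \<mu>" for \<mu>
    proof -
      have gmu: "gm A \<mu>" by (rule gm_pba[OF that])
      have "integral_ba A \<mu> F = 1 * integral_ba A \<mu> (\<lambda>\<omega>. \<Sum>g\<in>G. a g * g \<omega>) + (- b) * integral_ba A \<mu> (\<lambda>_. 1)"
        unfolding F_def by (rule int_lin[OF fA gmu sB Bfun_const[OF fA]])
      moreover have "integral_ba A \<mu> (\<lambda>\<omega>. \<Sum>g\<in>G. a g * g \<omega>) = (\<Sum>g\<in>G. a g * integral_ba A \<mu> g)"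
        using int_sum[OF fA gmu G(1), of id a] G(2) by auto
      moreover have "integral_ba A \<mu> (\<lambda>_. 1) = 1"
        using int_const[OF fA gmu, of 1] that unfolding pba_def by simp
      ultimately show ?thesis by simp
    qed
    define f where "f = (\<lambda>j. if j = i then F else (\<lambda>_. 0::real))"
    have sb: "semi_bet A t I f"
      unfolding semi_bet_def
    proof (intro conjI allI ballI)
      show "finite I" by (rule IS(1))
      fix j assume "j \<in> I"
      then show "f j \<in> Bfun A" unfolding f_def using FB Bfun_const[OF fA] by auto
    next
      fix \<omega>
      have D: "{\<omega>'. \<forall>j\<in>I. integral_ba A (t j \<omega>') (f j) \<ge> 0} = UNIV"
      proof (intro set_eqI iffI CollectI ballI)
        fix \<omega>' j assume j: "j \<in> I"
        have tj: "pba A (t j \<omega>')" using tp IS(2) j by blast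
        show "integral_ba A (t j \<omega>') (f j) \<ge> 0"
        proof (cases "j = i")
          case True
          have "integral_ba A (t j \<omega>') (f j) = (\<Sum>g\<in>G. a g * integral_ba A (t i \<omega>') g) - b"
            using True intF[OF tj] unfolding f_def by simp
          moreover have "(\<lambda>g. integral_ba A (t i \<omega>') g) \<in> V" unfolding V_def by blast
          ultimately show ?thesis using ab(2) by fastforce
        next
          case False
          then show ?thesis unfolding f_def using int_const[OF fA gm_pba[OF tj], of 0] by simp
        qed
      qed simp
      have cc: "cc_component A t I UNIV"
        unfolding cc_component_def using field_UNIV[OF fA] tp IS(2) unfolding pba_def by blast
      show "commonly_certain A t I {\<omega>'. \<forall>j\<in>I. integral_ba A (t j \<omega>') (f j) \<ge> 0} \<omega>"
        unfolding D commonly_certain_def using cc by blast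
    qed
    have sumf: "(\<lambda>\<omega>. \<Sum>j\<in>I. f j \<omega>) = F"
    proof
      fix \<omega>
      have "(\<Sum>j\<in>I. f j \<omega>) = (\<Sum>j\<in>I. if j = i then F \<omega> else 0)" unfolding f_def by (rule sum.cong) auto
      also have "\<dots> = F \<omega>" using IS(1) i(1) by simp
      finally show "(\<Sum>j\<in>I. f j \<omega>) = F \<omega>" .
    qed
    have "integral_ba A P F = integral_ba A P' F" unfolding P'_def by (rule int_ext[OF fA, symmetric])
    also have "\<dots> = (\<Sum>g\<in>G. a g * z g) - b" unfolding z_def by (rule intF[OF P'])
    also have "\<dots> < 0" using ab(1) by simp
    finally show ?thesis using sb sumf by auto
  qed
  then show ?thesis unfolding universal_money_pump_def using IS by blast
qed

theorem theorem5:
  fixes N :: "'i set" and A :: "'w set set" and M :: "'i \<Rightarrow> 'w set set"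
    and t :: "'i \<Rightarrow> 'w \<Rightarrow> 'w set \<Rightarrow> real"
  assumes "type_space N A M t"
  shows "(universally_consistent N A M t \<and> \<not> universal_money_pump N A M t) \<or>
         (\<not> universally_consistent N A M t \<and> universal_money_pump N A M t)"
proof -
  have fA: "field_on A" and tp: "\<forall>i\<in>N. \<forall>\<omega>. pba A (t i \<omega>)"
    using assms unfolding type_space_def by auto
  show ?thesis using dir1[OF fA tp] dir2[OF fA tp] by blast
qed

end
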